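(* Let $K\in\mathbb R^{m\times L(m+r)}$ and consider the closed loop $v(t+1)=(\Theta+\Pi K)v(t)$, $t\ge L$. Then $v(t)\to0$ as $t\to\infty$ for every realization of $v(L)\sim\mathcal N_\Phi$ if and only if $P^\top(\Theta+\Pi K)P$ is Schur.
   Context: System $\Sigma_s$: $x(t+1)=Ax(t)+Bu(t)$, $y(t)=Cx(t)$, $t\ge0$, $x\in\mathbb R^n,u\in\mathbb R^m,y\in\mathbb R^r$; standing assumptions: $(A,B,C)$ minimal, $A$ Schur. $\mathcal R_L=[A^{L-1}B,\dots,B]$, $\mathcal O_L=[C^\top,\dots,(CA^{L-1})^\top]^\top$, $\mathcal H_L$ the $Lr\times Lm$ block lower-triangular Toeplitz matrix with $(i,j)$ block $H_{i-j}$, $H_0=0$, $H_k=CA^{k-1}B$. Fix $L$ with $\operatorname{rank}\mathcal O_L=n$. $\Gamma=[\mathcal R_L-A^L\mathcal O_L^\dagger\mathcal H_L,\ A^L\mathcal O_L^\dagger]$; $\Theta=\mathrm{diag}(S_m,S_r)+EC\Gamma\in\mathbb R^{L(m+r)\times L(m+r)}$, with $S_k$ the $Lk\times Lk$ block matrix having $I_k$ in blocks $(i,i+1)$, $i<L$, zeros elsewhere, $E$ having $I_r$ in its last $r$ rows, zeros elsewhere; $\Pi\in\mathbb R^{L(m+r)\times m}$ has $I_m$ in rows $(L-1)m+1,\dots,Lm$, zeros elsewhere. (This is the dynamics of the IOH $v(t)=[u(t-L)^\top,\dots,u(t-1)^\top,y(t-L)^\top,\dots,y(t-1)^\top]^\top$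 of $\Sigma_s$ with $y=C\Gamma v$.) $\mathscr P=\mathrm{im}[\Theta^{L(m+r)-1}\Pi,\dots,\Pi]$; $P\in\mathbb R^{L(m+r)\times(Lm+n)}$ satisfies $\mathrm{im}P=\mathscr P$, $P^\top P=I$. $\Phi\ge0$ with $\mathrm{im}\Phi=\mathscr P$; $\mathcal N_\Phi$ is a Gaussian distribution with second moment about zero equal to $\Phi$. *)

theory Defs
  imports "Jordan_Normal_Form.Matrix" "Jordan_Normal_Form.Char_Poly" "Jordan_Normal_Form.DL_Rank"
begin

(* All matrices are Jordan_Normal_Form matrices with explicit dimensions; indices are 0-based. *)

definition mrank :: "real mat \<Rightarrow> nat" where
  "mrank M = vec_space.rank (dim_row M) M"

definition colspace :: "real mat \<Rightarrow> real vec set" where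
  "colspace M = {M *\<^sub>v x | x. x \<in> carrier_vec (dim_col M)}"

definition hcat :: "'a::zero mat \<Rightarrow> 'a mat \<Rightarrow> 'a mat" where
  "hcat X Y = mat (dim_row X) (dim_col X + dim_col Y)
     (\<lambda>(i,j). if j < dim_col X then X $$ (i,j) else Y $$ (i, j - dim_col X))"

definition pinv :: "real mat \<Rightarrow> real mat" where
  "pinv M = (THE X. X \<in> carrier_mat (dim_col M) (dim_row M) \<and> M * X * M = M \<and> X * M * X = X
                  \<and> (M * X)\<^sup>T = M * X \<and> (X * M)\<^sup>T = X * M)"

definition schur :: "real mat \<Rightarrow> bool" where
  "schur M = (\<forall>z. eigenvalue (map_mat complex_of_real M) z \<longrightarrow> cmod z < 1)"

definition psd :: "real mat \<Rightarrow> bool" where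
  "psd M = (M\<^sup>T = M \<and> (\<forall>x \<in> carrier_vec (dim_row M). x \<bullet> (M *\<^sub>v x) \<ge> 0))"

(* R_L = [A^(L-1) B, ..., A B, B] : n x Lm ; block k (0-based) is A^(L-1-k) B *)
definition reach_mat :: "nat \<Rightarrow> real mat \<Rightarrow> real mat \<Rightarrow> real mat" where
  "reach_mat L A B = mat (dim_row A) (L * dim_col B)
     (\<lambda>(i,j). ((A ^\<^sub>m (L - 1 - j div dim_col B)) * B) $$ (i, j mod dim_col B))"

(* O_L = [C; CA; ...; CA^(L-1)] : Lr x n ; block k (0-based) is C A^k *)
definition obs_mat :: "nat \<Rightarrow> real mat \<Rightarrow> real mat \<Rightarrow> real mat" where
  "obs_mat L A C = mat (L * dim_row C) (dim_col A)
     (\<lambda>(i,j). (C * (A ^\<^sub>m (i div dim_row C))) $$ (i mod dim_row C, j))"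

definition markov :: "real mat \<Rightarrow> real mat \<Rightarrow> real mat \<Rightarrow> nat \<Rightarrow> real mat" where
  "markov A B C k = (if k = 0 then 0\<^sub>m (dim_row C) (dim_col B) else C * (A ^\<^sub>m (k - 1)) * B)"

(* H_L : Lr x Lm block lower-triangular Toeplitz, block (a,b) = H_(a-b) (zero if a <= b) *)
definition toep_mat :: "nat \<Rightarrow> real mat \<Rightarrow> real mat \<Rightarrow> real mat \<Rightarrow> real mat" where
  "toep_mat L A B C = mat (L * dim_row C) (L * dim_col B)
     (\<lambda>(i,j). let a = i div dim_row C; b = j div dim_col B in
        if b < a then markov A B C (a - b) $$ (i mod dim_row C, j mod dim_col B) else 0)"

definition minimal :: "real mat \<Rightarrow> real mat \<Rightarrow> real mat \<Rightarrow> bool" where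
  "minimal A B C = (mrank (reach_mat (dim_row A) A B) = dim_row A
                    \<and> mrank (obs_mat (dim_row A) A C) = dim_row A)"

definition Gamma_mat :: "nat \<Rightarrow> real mat \<Rightarrow> real mat \<Rightarrow> real mat \<Rightarrow> real mat" where
  "Gamma_mat L A B C = hcat (reach_mat L A B - (A ^\<^sub>m L) * pinv (obs_mat L A C) * toep_mat L A B C)
                            ((A ^\<^sub>m L) * pinv (obs_mat L A C))"

(* S_k : Lk x Lk, I_k in blocks (i,i+1) *)
definition shift_mat :: "nat \<Rightarrow> nat \<Rightarrow> real mat" where
  "shift_mat L k = mat (L * k) (L * k) (\<lambda>(a,b). if b = a + k then 1 else 0)"

(* E : L(m+r) x r, I_r in last r rows *)
definition E_mat :: "nat \<Rightarrow> nat \<Rightarrow> nat \<Rightarrow> real mat" where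
  "E_mat L m r = mat (L * (m + r)) r (\<lambda>(a,b). if a + r = L * (m + r) + b then 1 else 0)"

(* Pi : L(m+r) x m, I_m in rows (L-1)m+1 .. Lm (1-based) *)
definition Pi_mat :: "nat \<Rightarrow> nat \<Rightarrow> nat \<Rightarrow> real mat" where
  "Pi_mat L m r = mat (L * (m + r)) m (\<lambda>(a,b). if a = (L - 1) * m + b then 1 else 0)"

definition Theta_mat :: "nat \<Rightarrow> real mat \<Rightarrow> real mat \<Rightarrow> real mat \<Rightarrow> real mat" where
  "Theta_mat L A B C =
     four_block_mat (shift_mat L (dim_col B)) (0\<^sub>m (L * dim_col B) (L * dim_row C))
                    (0\<^sub>m (L * dim_row C) (L * dim_col B)) (shift_mat L (dim_row C))
     + E_mat L (dim_col B) (dim_row C) * C * Gamma_mat L A B C"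

(* [Th^(N-1) Pi, ..., Th Pi, Pi], N = dim Th *)
definition ctrb_mat :: "real mat \<Rightarrow> real mat \<Rightarrow> real mat" where
  "ctrb_mat Th Pm = mat (dim_row Th) (dim_row Th * dim_col Pm)
     (\<lambda>(i,j). ((Th ^\<^sub>m (dim_row Th - 1 - j div dim_col Pm)) * Pm) $$ (i, j mod dim_col Pm))"

definition Pspace :: "nat \<Rightarrow> real mat \<Rightarrow> real mat \<Rightarrow> real mat \<Rightarrow> real vec set" where
  "Pspace L A B C = colspace (ctrb_mat (Theta_mat L A B C) (Pi_mat L (dim_col B) (dim_row C)))"

(* Set of possible realizations of a zero-mean Gaussian N_Phi with second moment Phi:
   its support, which is im Phi. *)
definition gaussian_realizations :: "real mat \<Rightarrow> real vec set" where
  "gaussian_realizations Phi = colspace Phi"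

end

theory Submission
  imports Defs "Jordan_Normal_Form.Spectral_Radius"
begin


lemma rank_inj:
  fixes Ob :: "real mat"
  assumes Ob: "Ob \<in> carrier_mat nr nc" and rk: "vec_space.rank nr Ob = nc"
    and x: "x \<in> carrier_vec nc" and Ox: "Ob *\<^sub>v x = 0\<^sub>v nr"
  shows "x = 0\<^sub>v nc"
proof (rule ccontr)
  interpret vec_space "TYPE(real)" nr .
  assume nz: "x \<noteq> 0\<^sub>v nc"
  show False
  proof (cases "distinct (cols Ob)")
    case True
    have "lin_indpt (set (cols Ob))"
      using full_rank_lin_indpt[OF Ob rk True] .
    moreover have "lin_dep (set (cols Ob))"
      using lin_depI[OF Ob x nz Ox True] .
    ultimately show False by blast
  next
    case False
    obtain S where S: "maximal S (\<lambda>T. T \<subseteq> set (cols Ob) \<and> lin_indpt T)"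
      using maximal_exists[of "(\<lambda>T. T \<subseteq> set (cols Ob) \<and> lin_indpt T)" "card (set (cols Ob))" "{}"]
      by (meson List.finite_set card_mono empty_iff empty_subsetI finite_lin_indpt2 rev_finite_subset)
    then have "card S \<le> card (set (cols Ob))" by (simp add: card_mono maximal_def)
    moreover have "card (set (cols Ob)) < nc"
      using False Ob card_distinct cols_length card_length
      by (metis carrier_matD(2) nat_less_le)
    ultimately have "card S < nc" by linarith
    with rank_card_indpt[OF Ob S] rk show False by simp
  qed
qed




lemma self_sprod_zero:
  fixes w :: "real vec"
  assumes w: "w \<in> carrier_vec k" and z: "w \<bullet> w = 0"
  shows "w = 0\<^sub>v k"
proof -
  have "(\<Sum>i\<in>{0..<k}. w $ i * w $ i) = 0" using z w unfolding scalar_prod_def by auto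
  hence "\<forall>i\<in>{0..<k}. w $ i * w $ i = 0"
    by (subst (asm) sum_nonneg_eq_0_iff) auto
  thus ?thesis using w by (intro eq_vecI) auto
qed

definition pinv_pred :: "real mat \<Rightarrow> real mat \<Rightarrow> bool" where
  "pinv_pred M X = (X \<in> carrier_mat (dim_col M) (dim_row M) \<and> M * X * M = M \<and> X * M * X = X
                  \<and> (M * X)\<^sup>T = M * X \<and> (X * M)\<^sup>T = X * M)"

lemma pinv_unique:
  assumes Ob: "Ob \<in> carrier_mat nr nc" and X: "pinv_pred Ob X" and Y: "pinv_pred Ob Y"
  shows "X = Y"
proof -
  from X Ob have Xc: "X \<in> carrier_mat nc nr" and X1: "Ob * X * Ob = Ob" and X2: "X * Ob * X = X"
    and X3: "(Ob * X)\<^sup>T = Ob * X" and X4: "(X * Ob)\<^sup>T = X * Ob" unfolding pinv_pred_def by auto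
  from Y Ob have Yc: "Y \<in> carrier_mat nc nr" and Y1: "Ob * Y * Ob = Ob" and Y2: "Y * Ob * Y = Y"
    and Y3: "(Ob * Y)\<^sup>T = Ob * Y" and Y4: "(Y * Ob)\<^sup>T = Y * Ob" unfolding pinv_pred_def by auto
  note c = Ob Xc Yc
  have OX: "Ob * X = Ob * Y"
  proof -
    have "Ob * Y = (Ob * X * Ob) * Y" using X1 by simp
    also have "\<dots> = (Ob * X) * (Ob * Y)" using assoc_mult_mat[of "Ob * X" nr nr Ob nc Y nr] c by auto
    also have "\<dots> = (Ob * X)\<^sup>T * (Ob * Y)\<^sup>T" using X3 Y3 by simp
    also have "\<dots> = (Ob * Y * (Ob * X))\<^sup>T" using c by (subst transpose_mult[of _ nr nr]) auto
    also have "Ob * Y * (Ob * X) = (Ob * Y * Ob) * X" using assoc_mult_mat[of "Ob * Y" nr nr Ob nc X nr] c by auto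
    also have "\<dots> = Ob * X" using Y1 by simp
    finally show ?thesis using X3 by simp
  qed
  have XO: "X * Ob = Y * Ob"
  proof -
    have "X * Ob = X * (Ob * Y * Ob)" using Y1 by simp
    also have "\<dots> = (X * Ob) * (Y * Ob)" using assoc_mult_mat[of X nc nr Ob nc "Y * Ob" nc] assoc_mult_mat[of Ob nr nc Y nr Ob nc] c by auto
    also have "\<dots> = (X * Ob)\<^sup>T * (Y * Ob)\<^sup>T" using X4 Y4 by simp
    also have "\<dots> = (Y * Ob * (X * Ob))\<^sup>T" using c by (subst transpose_mult[of _ nc nc]) auto
    also have "Y * Ob * (X * Ob) = Y * (Ob * X * Ob)" using assoc_mult_mat[of Y nc nr Ob nc "X * Ob" nc] assoc_mult_mat[of Ob nr nc X nr Ob nc] c by auto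
    also have "\<dots> = Y * Ob" using X1 by simp
    finally show ?thesis using Y4 by simp
  qed
  have "X = X * Ob * X" using X2 by simp
  also have "\<dots> = X * (Ob * X)" using c by (simp add: assoc_mult_mat[of _ nc nr])
  also have "\<dots> = X * (Ob * Y)" using OX by simp
  also have "\<dots> = (X * Ob) * Y" using c by (simp add: assoc_mult_mat[of _ nc nr])
  also have "\<dots> = (Y * Ob) * Y" using XO by simp
  also have "\<dots> = Y" using Y2 by simp
  finally show ?thesis .
qed

lemma pinv_exists:
  assumes Ob: "Ob \<in> carrier_mat nr nc"
    and inj: "\<And>x. x \<in> carrier_vec nc \<Longrightarrow> Ob *\<^sub>v x = 0\<^sub>v nr \<Longrightarrow> x = 0\<^sub>v nc"
  shows "\<exists>X. pinv_pred Ob X"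
proof -
  define G where "G = Ob\<^sup>T * Ob"
  have Gc: "G \<in> carrier_mat nc nc" using Ob unfolding G_def by auto
  have "det G \<noteq> 0"
  proof
    assume "det G = 0"
    then obtain v where v: "v \<in> carrier_vec nc" "v \<noteq> 0\<^sub>v nc" "G *\<^sub>v v = 0\<^sub>v nc"
      using det_0_iff_vec_prod_zero_field[OF Gc] by auto
    have "(Ob *\<^sub>v v) \<bullet> (Ob *\<^sub>v v) = (Ob\<^sup>T *\<^sub>v (Ob *\<^sub>v v)) \<bullet> v"
      using transpose_vec_mult_scalar[OF Ob v(1), of "Ob *\<^sub>v v"] Ob v by auto
    also have "Ob\<^sup>T *\<^sub>v (Ob *\<^sub>v v) = G *\<^sub>v v" unfolding G_def using Ob v by auto
    finally have "(Ob *\<^sub>v v) \<bullet> (Ob *\<^sub>v v) = 0" using v by simp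
    hence "Ob *\<^sub>v v = 0\<^sub>v nr" using Ob v by (intro self_sprod_zero[of _ nr]) auto
    with inj v show False by auto
  qed
  from det_non_zero_imp_unit[OF Gc this, of "()"]
  obtain Q where Qc: "Q \<in> carrier_mat nc nc" and QG: "Q * G = 1\<^sub>m nc" and GQ: "G * Q = 1\<^sub>m nc"
    unfolding Units_def ring_mat_def by auto
  have GT: "G\<^sup>T = G" unfolding G_def using Ob by (subst transpose_mult[of _ nc nr]) auto
  have QT: "Q\<^sup>T = Q"
  proof -
    have "Q\<^sup>T * G = 1\<^sub>m nc"
      using transpose_mult[OF Gc Qc] GQ GT by simp
    have "Q\<^sup>T = Q\<^sup>T * (G * Q)" using GQ Qc by simp
    also have "\<dots> = (Q\<^sup>T * G) * Q" using Qc Gc by (simp add: assoc_mult_mat[of _ nc nc])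
    finally show ?thesis using \<open>Q\<^sup>T * G = 1\<^sub>m nc\<close> Qc by simp
  qed
  define X where "X = Q * Ob\<^sup>T"
  have Xc: "X \<in> carrier_mat nc nr" using Qc Ob unfolding X_def by auto
  have XO: "X * Ob = 1\<^sub>m nc"
    unfolding X_def using Qc Ob QG G_def by (simp add: assoc_mult_mat[of _ nc nc])
  have "Ob * X * Ob = Ob" using XO Ob Xc by (simp add: assoc_mult_mat[of _ nr nc])
  moreover have "X * Ob * X = X" using XO Xc by simp
  moreover have "(X * Ob)\<^sup>T = X * Ob" using XO by simp
  moreover have "(Ob * X)\<^sup>T = Ob * X"
  proof -
    have "(Ob * X)\<^sup>T = X\<^sup>T * Ob\<^sup>T" using transpose_mult[OF Ob Xc] .
    also have "X\<^sup>T = Ob * Q" unfolding X_def using transpose_mult[of Q nc nc "Ob\<^sup>T" nr] Qc Ob QT by simp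
    also have "Ob * Q * Ob\<^sup>T = Ob * X" unfolding X_def using Qc Ob by (simp add: assoc_mult_mat[of _ nr nc])
    finally show ?thesis .
  qed
  ultimately show ?thesis using Xc Ob unfolding pinv_pred_def by (intro exI[of _ X]) auto
qed

lemma pinv_carrier:
  assumes Ob: "Ob \<in> carrier_mat nr nc"
    and inj: "\<And>x. x \<in> carrier_vec nc \<Longrightarrow> Ob *\<^sub>v x = 0\<^sub>v nr \<Longrightarrow> x = 0\<^sub>v nc"
  shows "pinv Ob \<in> carrier_mat nc nr"
proof -
  obtain X where X: "pinv_pred Ob X" using pinv_exists[OF Ob inj] by auto
  have "\<exists>!X. pinv_pred Ob X" using X pinv_unique[OF Ob] by blast
  hence "pinv_pred Ob (pinv Ob)" unfolding pinv_def pinv_pred_def[symmetric] by (rule theI')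
  thus ?thesis using Ob unfolding pinv_pred_def by auto
qed




lemma hcat_carrier: "X \<in> carrier_mat nr a \<Longrightarrow> Y \<in> carrier_mat nr b \<Longrightarrow> hcat X Y \<in> carrier_mat nr (a + b)"
  unfolding hcat_def by auto

lemma hcat_mult_vec:
  assumes X: "X \<in> carrier_mat nr a" and Y: "Y \<in> carrier_mat nr b" and z: "z \<in> carrier_vec (a + b)"
  shows "hcat X Y *\<^sub>v z = X *\<^sub>v vec a (\<lambda>i. z $ i) + Y *\<^sub>v vec b (\<lambda>i. z $ (a + i))"
proof (rule eq_vecI)
  show "dim_vec (hcat X Y *\<^sub>v z) = dim_vec (X *\<^sub>v vec a (\<lambda>i. z $ i) + Y *\<^sub>v vec b (\<lambda>i. z $ (a + i)))"
    using X Y unfolding hcat_def by auto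
  fix i assume "i < dim_vec (X *\<^sub>v vec a (\<lambda>i. z $ i) + Y *\<^sub>v vec b (\<lambda>i. z $ (a + i)))"
  hence i: "i < nr" using Y by auto
  have "(hcat X Y *\<^sub>v z) $ i = (\<Sum>j\<in>{0..<a+b}. hcat X Y $$ (i,j) * z $ j)"
    using i X Y z unfolding hcat_def by (auto simp: scalar_prod_def)
  also have "\<dots> = (\<Sum>j\<in>{0..<a}. hcat X Y $$ (i,j) * z $ j) + (\<Sum>j\<in>{a..<a+b}. hcat X Y $$ (i,j) * z $ j)"
    by (rule sum.atLeastLessThan_concat[symmetric]) auto
  also have "(\<Sum>j\<in>{0..<a}. hcat X Y $$ (i,j) * z $ j) = (\<Sum>j\<in>{0..<a}. X $$ (i,j) * z $ j)"
    using i X Y unfolding hcat_def by (intro sum.cong) auto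
  also have "(\<Sum>j\<in>{a..<a+b}. hcat X Y $$ (i,j) * z $ j) = (\<Sum>j\<in>{0..<b}. hcat X Y $$ (i,j+a) * z $ (j+a))"
    using sum.shift_bounds_nat_ivl[of "\<lambda>j. hcat X Y $$ (i,j) * z $ j" 0 a b] by (simp add: add.commute)
  also have "\<dots> = (\<Sum>j\<in>{0..<b}. Y $$ (i,j) * z $ (a+j))"
    using i X Y unfolding hcat_def by (intro sum.cong) (auto simp: add.commute)
  finally show "(hcat X Y *\<^sub>v z) $ i = (X *\<^sub>v vec a (\<lambda>i. z $ i) + Y *\<^sub>v vec b (\<lambda>i. z $ (a + i))) $ i"
    using i X Y by (auto simp: scalar_prod_def)
qed

lemma hcat_mult_vec2:
  assumes X: "X \<in> carrier_mat nr a" and Y: "Y \<in> carrier_mat nr b"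
    and x: "x \<in> carrier_vec a" and y: "y \<in> carrier_vec b"
  shows "hcat X Y *\<^sub>v vec (a + b) (\<lambda>i. if i < a then x $ i else y $ (i - a)) = X *\<^sub>v x + Y *\<^sub>v y"
proof -
  have "vec a (\<lambda>i. vec (a + b) (\<lambda>i. if i < a then x $ i else y $ (i - a)) $ i) = x"
    using x by (intro eq_vecI) auto
  moreover have "vec b (\<lambda>i. vec (a + b) (\<lambda>i. if i < a then x $ i else y $ (i - a)) $ (a + i)) = y"
    using y by (intro eq_vecI) auto
  ultimately show ?thesis using hcat_mult_vec[OF X Y, of "vec (a + b) (\<lambda>i. if i < a then x $ i else y $ (i - a))"]
    by auto
qed

lemma Theta_carrier:
  assumes A: "A \<in> carrier_mat n n" and B: "B \<in> carrier_mat n m" and C: "C \<in> carrier_mat r n"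
    and pv: "pinv (obs_mat L A C) \<in> carrier_mat n (L * r)"
  shows "Theta_mat L A B C \<in> carrier_mat (L * (m + r)) (L * (m + r))"
proof -
  have "Gamma_mat L A B C \<in> carrier_mat n (L * m + L * r)"
    unfolding Gamma_mat_def using A B C pv
    by (intro hcat_carrier) (auto simp: toep_mat_def reach_mat_def)
  thus ?thesis unfolding Theta_mat_def using B C
    by (auto simp: E_mat_def algebra_simps)
qed




definition gen :: "real mat \<Rightarrow> real mat \<Rightarrow> nat \<Rightarrow> real mat" where
 "gen Th Pm k = mat (dim_row Th) (k * dim_col Pm)
     (\<lambda>(i,j). ((Th ^\<^sub>m (k - 1 - j div dim_col Pm)) * Pm) $$ (i, j mod dim_col Pm))"

lemma ctrb_gen: "ctrb_mat Th Pm = gen Th Pm (dim_row Th)"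
  by (simp add: ctrb_mat_def gen_def)

lemma mat_vec_zero: "M *\<^sub>v 0\<^sub>v (dim_col M) = 0\<^sub>v (dim_row M)"
  by (intro eq_vecI) (auto simp: scalar_prod_def)

lemma mat_vec_zero': "M \<in> carrier_mat a b \<Longrightarrow> M *\<^sub>v 0\<^sub>v b = 0\<^sub>v a"
  using mat_vec_zero[of M] by auto

lemma colspace_carrier: "M \<in> carrier_mat a b \<Longrightarrow> colspace M \<subseteq> carrier_vec a"
  unfolding colspace_def by auto

lemma colspace_zero: "M \<in> carrier_mat a b \<Longrightarrow> 0\<^sub>v a \<in> colspace M"
  unfolding colspace_def using mat_vec_zero'[of M a b]
  by (intro CollectI exI[of _ "0\<^sub>v b"]) auto

lemma colspace_add: assumes M: "M \<in> carrier_mat a b" and "u \<in> colspace M" "w \<in> colspace M"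
  shows "u + w \<in> colspace M"
proof -
  obtain x y where x: "x \<in> carrier_vec b" "u = M *\<^sub>v x" and y: "y \<in> carrier_vec b" "w = M *\<^sub>v y"
    using assms unfolding colspace_def by auto
  have "u + w = M *\<^sub>v (x + y)" using x y M by (simp add: mult_add_distrib_mat_vec)
  thus ?thesis unfolding colspace_def using x y M by (intro CollectI exI[of _ "x + y"]) auto
qed

lemma colspace_smult: assumes M: "M \<in> carrier_mat a b" and "u \<in> colspace M"
  shows "c \<cdot>\<^sub>v u \<in> colspace M"
proof -
  obtain x where x: "x \<in> carrier_vec b" "u = M *\<^sub>v x"
    using assms unfolding colspace_def by auto
  have "c \<cdot>\<^sub>v u = M *\<^sub>v (c \<cdot>\<^sub>v x)" using x M by (simp add: mult_mat_vec)
  thus ?thesis unfolding colspace_def using x M by (intro CollectI exI[of _ "c \<cdot>\<^sub>v x"]) auto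
qed

lemma pow_Suc_left: "Th \<in> carrier_mat N N \<Longrightarrow> Th ^\<^sub>m Suc p = Th * Th ^\<^sub>m p"
proof (induct p)
  case 0 then show ?case by simp
next
  case (Suc p)
  have "Th ^\<^sub>m Suc (Suc p) = Th ^\<^sub>m Suc p * Th" by (simp only: pow_mat.simps)
  also have "\<dots> = (Th * Th ^\<^sub>m p) * Th" using Suc by simp
  also have "\<dots> = Th * (Th ^\<^sub>m p * Th)" using assoc_mult_mat[OF Suc(2) pow_carrier_mat[OF Suc(2)] Suc(2)] .
  finally show ?case by (simp only: pow_mat.simps)
qed

context
  fixes Th Pm :: "real mat" and N m :: nat
  assumes Th: "Th \<in> carrier_mat N N" and Pm: "Pm \<in> carrier_mat N m"
begin

lemma gen_carrier: "gen Th Pm k \<in> carrier_mat N (k * m)"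
  using Th Pm unfolding gen_def by auto

lemma gen_Suc: "gen Th Pm (Suc k) = hcat (Th * gen Th Pm k) Pm"
proof (rule eq_matI)
  show "dim_row (gen Th Pm (Suc k)) = dim_row (hcat (Th * gen Th Pm k) Pm)"
    using Th Pm unfolding gen_def hcat_def by auto
  show "dim_col (gen Th Pm (Suc k)) = dim_col (hcat (Th * gen Th Pm k) Pm)"
    using Th Pm unfolding gen_def hcat_def by auto
  fix i j assume "i < dim_row (hcat (Th * gen Th Pm k) Pm)" "j < dim_col (hcat (Th * gen Th Pm k) Pm)"
  hence i: "i < N" and j: "j < k * m + m" using Th Pm unfolding gen_def hcat_def by auto
  show "gen Th Pm (Suc k) $$ (i, j) = hcat (Th * gen Th Pm k) Pm $$ (i, j)"
  proof (cases "j < k * m")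
    case True
    define q where "q = j div m"
    define c where "c = j mod m"
    have m0: "m > 0" using True by (cases m) auto
    have q: "q < k" using True m0 unfolding q_def by (simp add: less_mult_imp_div_less)
    have c: "c < m" using m0 unfolding c_def by auto
    have kq: "Suc k - 1 - q = Suc (k - 1 - q)" using q by auto
    have "gen Th Pm (Suc k) $$ (i, j) = (Th ^\<^sub>m (Suc k - 1 - q) * Pm) $$ (i, c)"
      using i j Th Pm unfolding gen_def q_def c_def by auto
    also have "Th ^\<^sub>m (Suc k - 1 - q) * Pm = Th * (Th ^\<^sub>m (k - 1 - q) * Pm)"
      unfolding kq pow_Suc_left[OF Th] using assoc_mult_mat[OF Th pow_carrier_mat[OF Th] Pm] by simp
    also have "\<dots> $$ (i, c) = row Th i \<bullet> col (Th ^\<^sub>m (k - 1 - q) * Pm) c"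
      using i c Th Pm by auto
    also have "col (Th ^\<^sub>m (k - 1 - q) * Pm) c = col (gen Th Pm k) j"
      using Th Pm c True unfolding gen_def q_def c_def by (intro eq_vecI) auto
    also have "row Th i \<bullet> col (gen Th Pm k) j = (Th * gen Th Pm k) $$ (i, j)"
      using i True Th Pm unfolding gen_def by auto
    also have "\<dots> = hcat (Th * gen Th Pm k) Pm $$ (i, j)"
      using i j True Th Pm unfolding hcat_def gen_def by auto
    finally show ?thesis .
  next
    case False
    have m0: "m > 0" using False j by (cases m) auto
    have jd: "j div m = k"
    proof -
      have "k * m \<le> j" "j < (Suc k) * m" using False j by auto
      thus ?thesis using m0 by (metis div_nat_eqI mult.commute)
    qed
    have jm: "j mod m = j - k * m" using False jd
      by (metis minus_div_mult_eq_mod mult.commute)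
    have "gen Th Pm (Suc k) $$ (i, j) = (Th ^\<^sub>m 0 * Pm) $$ (i, j - k * m)"
      using i j Th Pm jd jm unfolding gen_def by auto
    also have "\<dots> = Pm $$ (i, j - k * m)" using Th Pm by simp
    also have "\<dots> = hcat (Th * gen Th Pm k) Pm $$ (i, j)"
      using i j False Th Pm unfolding hcat_def gen_def by auto
    finally show ?thesis .
  qed
qed

definition W where "W k = colspace (gen Th Pm k)"

lemma W_eq: "W k = colspace (gen Th Pm k)" unfolding W_def ..

lemma W_carrier: "W k \<subseteq> carrier_vec N"
  unfolding W_def using colspace_carrier[OF gen_carrier] .

lemma W_zero: "0\<^sub>v N \<in> W k"
  unfolding W_def using colspace_zero[OF gen_carrier] .

lemma W_add: "u \<in> W k \<Longrightarrow> w \<in> W k \<Longrightarrow> u + w \<in> W k"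
  unfolding W_def using colspace_add[OF gen_carrier] .

lemma W_smult: "u \<in> W k \<Longrightarrow> c \<cdot>\<^sub>v u \<in> W k"
  unfolding W_def using colspace_smult[OF gen_carrier] .

lemma W_0: "W 0 = {0\<^sub>v N}"
proof -
  have "gen Th Pm 0 *\<^sub>v x = 0\<^sub>v N" if "x \<in> carrier_vec 0" for x
    using gen_carrier[of 0] that by (intro eq_vecI) (auto simp: scalar_prod_def)
  thus ?thesis using W_zero[of 0] unfolding W_def colspace_def using gen_carrier[of 0] by auto
qed

lemma W_Suc: "W (Suc k) = {Pm *\<^sub>v x + Th *\<^sub>v w | x w. x \<in> carrier_vec m \<and> w \<in> W k}"
proof -
  have G: "gen Th Pm k \<in> carrier_mat N (k * m)" by (rule gen_carrier)
  have TG: "Th * gen Th Pm k \<in> carrier_mat N (k * m)" using Th G by auto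
  show ?thesis
  proof (intro equalityI subsetI)
    fix z assume "z \<in> W (Suc k)"
    then obtain y where y: "y \<in> carrier_vec (k * m + m)" and z: "z = gen Th Pm (Suc k) *\<^sub>v y"
      unfolding W_def colspace_def using gen_carrier[of "Suc k"] by (auto simp: add.commute)
    define y1 where "y1 = vec (k * m) (\<lambda>i. y $ i)"
    define y2 where "y2 = vec m (\<lambda>i. y $ (k * m + i))"
    have "z = (Th * gen Th Pm k) *\<^sub>v y1 + Pm *\<^sub>v y2"
      unfolding z gen_Suc y1_def y2_def using hcat_mult_vec[OF TG Pm y] .
    also have "\<dots> = Pm *\<^sub>v y2 + Th *\<^sub>v (gen Th Pm k *\<^sub>v y1)"
      using Th G Pm unfolding y1_def y2_def by (subst comm_add_vec[of _ N]) auto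
    finally have z: "z = Pm *\<^sub>v y2 + Th *\<^sub>v (gen Th Pm k *\<^sub>v y1)" .
    have "gen Th Pm k *\<^sub>v y1 \<in> W k" unfolding W_def colspace_def y1_def using G by auto
    moreover have "y2 \<in> carrier_vec m" unfolding y2_def by auto
    ultimately show "z \<in> {Pm *\<^sub>v x + Th *\<^sub>v w | x w. x \<in> carrier_vec m \<and> w \<in> W k}"
      unfolding z by blast
  next
    fix z assume "z \<in> {Pm *\<^sub>v x + Th *\<^sub>v w | x w. x \<in> carrier_vec m \<and> w \<in> W k}"
    then obtain x y where x: "x \<in> carrier_vec m" and y: "y \<in> carrier_vec (k * m)"
      and z: "z = Pm *\<^sub>v x + Th *\<^sub>v (gen Th Pm k *\<^sub>v y)"
      unfolding W_def colspace_def using G by auto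
    have "z = (Th * gen Th Pm k) *\<^sub>v y + Pm *\<^sub>v x"
      using Th G Pm x y unfolding z by (subst comm_add_vec[of _ N]) auto
    also have "\<dots> = gen Th Pm (Suc k) *\<^sub>v vec (k * m + m) (\<lambda>i. if i < k * m then y $ i else x $ (i - k * m))"
      unfolding gen_Suc using hcat_mult_vec2[OF TG Pm y x] by simp
    finally show "z \<in> W (Suc k)"
      unfolding W_def colspace_def using gen_carrier[of "Suc k"] by (auto simp: add.commute)
  qed
qed


lemma W_mono: "W k \<subseteq> W (Suc k)"
proof (induct k)
  case 0
  have "0\<^sub>v N = Pm *\<^sub>v 0\<^sub>v m + Th *\<^sub>v 0\<^sub>v N"
    using Th Pm mat_vec_zero'[OF Th] mat_vec_zero'[OF Pm] by simp
  hence "0\<^sub>v N \<in> W (Suc 0)" unfolding W_Suc[of 0] using W_zero[of 0] zero_carrier_vec[of m] by blast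
  thus ?case unfolding W_0 by auto
next
  case (Suc k)
  show ?case
  proof
    fix z assume "z \<in> W (Suc k)"
    then obtain x w where "x \<in> carrier_vec m" "w \<in> W k" "z = Pm *\<^sub>v x + Th *\<^sub>v w"
      unfolding W_Suc[of k] by blast
    moreover have "w \<in> W (Suc k)" using Suc \<open>w \<in> W k\<close> by blast
    ultimately show "z \<in> W (Suc (Suc k))" unfolding W_Suc[of "Suc k"] by blast
  qed
qed

lemma W_mono_le: "a \<le> b \<Longrightarrow> W a \<subseteq> W b"
proof (induct b)
  case 0 then show ?case by simp
next
  case (Suc b)
  then show ?case using W_mono[of b] by (cases "a = Suc b") auto
qed

lemma W_stable: "W k = W (Suc k) \<Longrightarrow> W (Suc k) = W (Suc (Suc k))"
  unfolding W_Suc[of "Suc k"] by (subst W_Suc[of k]) simp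

lemma W_stable_all: "W k = W (Suc k) \<Longrightarrow> k \<le> j \<Longrightarrow> W j = W (Suc j)"
proof (induct j)
  case 0 then show ?case by simp
next
  case (Suc j)
  then show ?case using W_stable[of j] by (cases "k = Suc j") auto
qed

lemma W_final: "W (Suc N) = W N"
proof (rule ccontr)
  assume ne: "W (Suc N) \<noteq> W N"
  have "\<forall>k\<in>{..N}. \<exists>w. w \<in> W (Suc k) \<and> w \<notin> W k"
  proof
    fix k assume "k \<in> {..N}"
    hence "W k \<noteq> W (Suc k)" using W_stable_all[of k N] ne by auto
    thus "\<exists>w. w \<in> W (Suc k) \<and> w \<notin> W k" using W_mono[of k] by blast
  qed
  then obtain w where w: "\<And>k. k \<le> N \<Longrightarrow> w k \<in> W (Suc k) \<and> w k \<notin> W k"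
    using bchoice[of "{..N}"] by (metis atMost_iff)
  have wc: "k \<le> N \<Longrightarrow> w k \<in> carrier_vec N" for k using w[of k] W_carrier by auto
  define X where "X = mat (Suc N) (Suc N) (\<lambda>(i,j). if i < N then w j $ i else 0)"
  have Xc: "X \<in> carrier_mat (Suc N) (Suc N)" unfolding X_def by auto
  have "X = mat\<^sub>r (Suc N) (Suc N) (\<lambda>i. if i = N then 0\<^sub>v (Suc N) else row X i)"
    by (rule eq_matI) (auto simp: X_def mat_of_rows_def)
  also have "det \<dots> = 0" by (rule det_row_0) (auto simp: X_def)
  finally have "det X = 0" .
  then obtain v where v: "v \<in> carrier_vec (Suc N)" "v \<noteq> 0\<^sub>v (Suc N)" "X *\<^sub>v v = 0\<^sub>v (Suc N)"
    using det_0_iff_vec_prod_zero_field[OF Xc] by auto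
  have sum0: "(\<Sum>j<Suc N. v $ j * w j $ i) = 0" if i: "i < N" for i
  proof -
    have "(X *\<^sub>v v) $ i = 0" using v(3) i by simp
    moreover have "(X *\<^sub>v v) $ i = (\<Sum>j<Suc N. v $ j * w j $ i)"
      using i v(1) unfolding X_def by (auto simp: scalar_prod_def lessThan_atLeast0 intro!: sum.cong)
    ultimately show ?thesis by simp
  qed
  have "\<exists>j. j \<le> N \<and> v $ j \<noteq> 0"
  proof (rule ccontr)
    assume "\<not> ?thesis"
    hence "v = 0\<^sub>v (Suc N)" using v(1) by (intro eq_vecI) auto
    with v(2) show False by simp
  qed
  define J where "J = (GREATEST j. j \<le> N \<and> v $ j \<noteq> 0)"
  have J: "J \<le> N" "v $ J \<noteq> 0"
    using GreatestI_nat[of "\<lambda>j. j \<le> N \<and> v $ j \<noteq> 0", OF _ ] \<open>\<exists>j. j \<le> N \<and> v $ j \<noteq> 0\<close>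
    unfolding J_def by (metis (no_types, lifting))+
  have Jmax: "J < j \<Longrightarrow> j \<le> N \<Longrightarrow> v $ j = 0" for j
    using Greatest_le_nat[of "\<lambda>j. j \<le> N \<and> v $ j \<noteq> 0" j N] unfolding J_def[symmetric] by auto
  define u where "u s = vec N (\<lambda>i. \<Sum>j<s. v $ j * w j $ i)" for s
  have uW: "s \<le> J \<Longrightarrow> u s \<in> W J" for s
  proof (induct s)
    case 0
    have "u 0 = 0\<^sub>v N" unfolding u_def by (intro eq_vecI) auto
    then show ?case using W_zero by simp
  next
    case (Suc s)
    have "u (Suc s) = u s + (v $ s) \<cdot>\<^sub>v w s"
      unfolding u_def using wc[of s] Suc J by (intro eq_vecI) auto
    moreover have "w s \<in> W J" using w[of s] W_mono_le[of "Suc s" J] Suc J by auto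
    ultimately show ?case using Suc W_add W_smult by auto
  qed
  have "w J = (- 1 / v $ J) \<cdot>\<^sub>v u J"
  proof (rule eq_vecI)
    show "dim_vec (w J) = dim_vec ((- 1 / v $ J) \<cdot>\<^sub>v u J)" using wc[of J] J unfolding u_def by auto
    fix i assume "i < dim_vec ((- 1 / v $ J) \<cdot>\<^sub>v u J)"
    hence i: "i < N" unfolding u_def by auto
    have "(\<Sum>j<Suc N. v $ j * w j $ i) = (\<Sum>j<Suc J. v $ j * w j $ i)"
      by (rule sum.mono_neutral_right) (use J Jmax in auto)
    hence "(\<Sum>j<J. v $ j * w j $ i) + v $ J * w J $ i = 0" using sum0[OF i] by simp
    thus "w J $ i = ((- 1 / v $ J) \<cdot>\<^sub>v u J) $ i"
      using i J unfolding u_def by (auto simp: field_simps)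
  qed
  hence "w J \<in> W J" using uW[of J] W_smult by auto
  with w[of J] J show False by auto
qed


lemma W_inv: "w \<in> W N \<Longrightarrow> Th *\<^sub>v w \<in> W N"
proof -
  assume w: "w \<in> W N"
  have wc: "w \<in> carrier_vec N" using w W_carrier by auto
  have "Th *\<^sub>v w = Pm *\<^sub>v 0\<^sub>v m + Th *\<^sub>v w"
    using mat_vec_zero'[OF Pm] Th wc by simp
  hence "Th *\<^sub>v w \<in> W (Suc N)" unfolding W_Suc[of N] using w zero_carrier_vec[of m] by blast
  thus ?thesis using W_final by simp
qed

lemma W_Pm: "x \<in> carrier_vec m \<Longrightarrow> Pm *\<^sub>v x \<in> W N"
proof -
  assume x: "x \<in> carrier_vec m"
  have "Pm *\<^sub>v x = Pm *\<^sub>v x + Th *\<^sub>v 0\<^sub>v N"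
    using mat_vec_zero'[OF Th] Pm x by simp
  hence "Pm *\<^sub>v x \<in> W (Suc N)" unfolding W_Suc[of N] using x W_zero[of N] by blast
  thus ?thesis using W_final by simp
qed

lemma W_closed_loop:
  assumes K: "K \<in> carrier_mat m N" and w: "w \<in> W N"
  shows "(Th + Pm * K) *\<^sub>v w \<in> W N"
proof -
  have wc: "w \<in> carrier_vec N" using w W_carrier by auto
  have "(Th + Pm * K) *\<^sub>v w = Th *\<^sub>v w + Pm *\<^sub>v (K *\<^sub>v w)"
    using add_mult_distrib_mat_vec[OF Th _ wc, of "Pm * K"] Pm K wc by simp
  thus ?thesis using W_add W_inv[OF w] W_Pm[of "K *\<^sub>v w"] K wc by simp
qed

end




lemma mat_unit_col: fixes A :: "real mat"
  shows "A \<in> carrier_mat a b \<Longrightarrow> j < b \<Longrightarrow> A *\<^sub>v unit_vec b j = col A j"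
  by (intro eq_vecI) auto

lemma mat_eq_by_vec:
  fixes A B :: "real mat"
  assumes A: "A \<in> carrier_mat a b" and B: "B \<in> carrier_mat a b"
    and eq: "\<And>y. y \<in> carrier_vec b \<Longrightarrow> A *\<^sub>v y = B *\<^sub>v y"
  shows "A = B"
proof (rule mat_col_eqI)
  fix j assume "j < dim_col B"
  hence j: "j < b" using B by auto
  show "col A j = col B j" using eq[of "unit_vec b j"] mat_unit_col[OF A j] mat_unit_col[OF B j] by simp
qed (use A B in auto)

lemma lim_mat_vec:
  fixes Q :: "real mat" and y :: "nat \<Rightarrow> real vec"
  assumes Q: "Q \<in> carrier_mat a N" and y: "\<And>k. y k \<in> carrier_vec N"
    and lim: "\<And>j. j < N \<Longrightarrow> (\<lambda>k. y k $ j) \<longlonglongrightarrow> 0"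
    and i: "i < a"
  shows "(\<lambda>k. (Q *\<^sub>v y k) $ i) \<longlonglongrightarrow> 0"
proof -
  have eq: "(Q *\<^sub>v y k) $ i = (\<Sum>j\<in>{0..<N}. Q $$ (i,j) * y k $ j)" for k
    using Q y[of k] i by (auto simp: scalar_prod_def)
  show ?thesis unfolding eq
    by (rule tendsto_null_sum) (auto intro!: tendsto_mult_right_zero lim)
qed

context
  fixes M P :: "real mat" and N d :: nat
  assumes M: "M \<in> carrier_mat N N" and P: "P \<in> carrier_mat N d"
    and PP: "P\<^sup>T * P = 1\<^sub>m d"
    and inv: "\<And>w. w \<in> colspace P \<Longrightarrow> M *\<^sub>v w \<in> colspace P"
begin

definition F where "F = P\<^sup>T * M * P"

lemma F_eq: "F = P\<^sup>T * M * P" unfolding F_def ..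

lemma F_carrier: "F \<in> carrier_mat d d" unfolding F_def using M P by auto

lemma MP: "M * P = P * F"
proof (rule mat_eq_by_vec[of _ N d])
  show "M * P \<in> carrier_mat N d" "P * F \<in> carrier_mat N d" using M P F_carrier by auto
  fix y :: "real vec" assume y: "y \<in> carrier_vec d"
  have "P *\<^sub>v y \<in> colspace P" unfolding colspace_def using P y by auto
  hence "M *\<^sub>v (P *\<^sub>v y) \<in> colspace P" by (rule inv)
  then obtain z where z: "z \<in> carrier_vec d" "M *\<^sub>v (P *\<^sub>v y) = P *\<^sub>v z"
    unfolding colspace_def using P by auto
  have PT: "P\<^sup>T \<in> carrier_mat d N" using P by simp
  have "(P * F) *\<^sub>v y = P *\<^sub>v (F *\<^sub>v y)" using assoc_mult_mat_vec[OF P F_carrier y] .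
  also have "F *\<^sub>v y = (P\<^sup>T * M) *\<^sub>v (P *\<^sub>v y)" unfolding F_def
    using assoc_mult_mat_vec[of "P\<^sup>T * M" d N P d y] PT M P y by simp
  also have "\<dots> = P\<^sup>T *\<^sub>v (M *\<^sub>v (P *\<^sub>v y))"
    using assoc_mult_mat_vec[OF PT M, of "P *\<^sub>v y"] P y by simp
  finally have "(P * F) *\<^sub>v y = P *\<^sub>v (P\<^sup>T *\<^sub>v (M *\<^sub>v (P *\<^sub>v y)))" .
  also have "\<dots> = P *\<^sub>v ((P\<^sup>T * P) *\<^sub>v z)" unfolding z(2) using P z by simp
  also have "\<dots> = P *\<^sub>v z" unfolding PP using z by simp
  also have "\<dots> = (M * P) *\<^sub>v y" using z M P y by simp
  finally show "(M * P) *\<^sub>v y = (P * F) *\<^sub>v y" by simp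
qed

lemma MP_pow: "M ^\<^sub>m k * P = P * F ^\<^sub>m k"
proof (induct k)
  case 0 then show ?case using M P F_carrier by simp
next
  case (Suc k)
  have "M ^\<^sub>m Suc k * P = M ^\<^sub>m k * (M * P)" using assoc_mult_mat[OF pow_carrier_mat[OF M] M P] by simp
  also have "\<dots> = (M ^\<^sub>m k * P) * F" unfolding MP using assoc_mult_mat[OF pow_carrier_mat[OF M] P F_carrier] by simp
  also have "\<dots> = P * (F ^\<^sub>m k * F)" unfolding Suc using assoc_mult_mat[OF P pow_carrier_mat[OF F_carrier] F_carrier] .
  finally show ?case by simp
qed

lemma MP_pow_vec: "x \<in> carrier_vec d \<Longrightarrow> M ^\<^sub>m k *\<^sub>v (P *\<^sub>v x) = P *\<^sub>v (F ^\<^sub>m k *\<^sub>v x)"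
  using MP_pow[of k] M P F_carrier
  by (metis assoc_mult_mat_vec pow_carrier_mat)

end




lemma pow_smult_mat: fixes G :: "complex mat"
  assumes G: "G \<in> carrier_mat d d"
  shows "(c \<cdot>\<^sub>m G) ^\<^sub>m k = c ^ k \<cdot>\<^sub>m G ^\<^sub>m k"
proof (induct k)
  case 0 then show ?case using G by (intro eq_matI) auto
next
  case (Suc k)
  have "(c \<cdot>\<^sub>m G) ^\<^sub>m Suc k = (c ^ k \<cdot>\<^sub>m G ^\<^sub>m k) * (c \<cdot>\<^sub>m G)" using Suc by simp
  also have "\<dots> = c ^ Suc k \<cdot>\<^sub>m (G ^\<^sub>m k * G)"
    using G by (intro eq_matI) auto
  finally show ?case by simp
qed

lemma schur_conv:
  fixes F :: "real mat"
  assumes F: "F \<in> carrier_mat d d" and sch: "schur F"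
    and x: "x \<in> carrier_vec d" and i: "i < d"
  shows "(\<lambda>k. (F ^\<^sub>m k *\<^sub>v x) $ i) \<longlonglongrightarrow> 0"
proof -
  define G where "G = map_mat complex_of_real F"
  have G: "G \<in> carrier_mat d d" using F unfolding G_def by auto
  have d0: "d > 0" using i by auto
  define r0 where "r0 = spectral_radius G"
  have "r0 \<in> norm ` spectrum G" unfolding r0_def by (rule spectral_radius_mem_max(1)[OF G d0])
  then obtain z0 where z0: "eigenvalue G z0" "r0 = norm z0" unfolding spectrum_def by auto
  have r0: "r0 < 1" "r0 \<ge> 0" using sch z0 unfolding schur_def G_def by auto
  define \<rho> where "\<rho> = (1 + r0) / 2"
  have rho: "0 < \<rho>" "\<rho> < 1" "r0 < \<rho>" using r0 unfolding \<rho>_def by auto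
  define G' where "G' = complex_of_real (1 / \<rho>) \<cdot>\<^sub>m G"
  have G': "G' \<in> carrier_mat d d" using G unfolding G'_def by auto
  have "spectral_radius G' \<in> norm ` spectrum G'" by (rule spectral_radius_mem_max(1)[OF G' d0])
  then obtain mu where mu: "eigenvalue G' mu" "spectral_radius G' = norm mu" unfolding spectrum_def by auto
  then obtain v where v: "eigenvector G' v mu" unfolding eigenvalue_def by auto
  have "G *\<^sub>v v = (complex_of_real \<rho> * mu) \<cdot>\<^sub>v v"
  proof -
    have vc: "v \<in> carrier_vec d" and ev: "G' *\<^sub>v v = mu \<cdot>\<^sub>v v" using v G' unfolding eigenvector_def by auto
    have "G = complex_of_real \<rho> \<cdot>\<^sub>m G'" unfolding G'_def using rho G by (intro eq_matI) auto
    hence "G *\<^sub>v v = complex_of_real \<rho> \<cdot>\<^sub>v (G' *\<^sub>v v)" using G' vc by (auto simp: scalar_prod_def sum_distrib_left ac_simps)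
    thus ?thesis using ev by auto
  qed
  hence "eigenvalue G (complex_of_real \<rho> * mu)" using v G G' unfolding eigenvalue_def eigenvector_def by auto
  hence "norm (complex_of_real \<rho> * mu) \<le> r0" unfolding r0_def
    by (intro spectral_radius_mem_max(2)[OF G d0]) (auto simp: spectrum_def)
  hence "\<rho> * norm mu \<le> r0" using rho by (simp add: norm_mult)
  hence "norm mu < 1" using rho
    by (smt (verit, best) mult_le_cancel_left1 mult_less_cancel_left_pos)
  hence "spectral_radius G' < 1" using mu by simp
  from spectral_radius_jnf_norm_bound_less_1_upper_triangular[OF G' this]
  obtain c where c: "\<And>k. norm_bound (G' ^\<^sub>m k) c" by auto
  have bnd: "\<bar>(F ^\<^sub>m k) $$ (i', j)\<bar> \<le> \<rho> ^ k * c" if "i' < d" "j < d" for k i' j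
  proof -
    have "map_mat complex_of_real (F ^\<^sub>m k) = G ^\<^sub>m k" unfolding G_def using F by (rule of_real_hom.mat_hom_pow)
    also have "G = complex_of_real \<rho> \<cdot>\<^sub>m G'" unfolding G'_def using rho G by (intro eq_matI) auto
    also have "(complex_of_real \<rho> \<cdot>\<^sub>m G') ^\<^sub>m k = (complex_of_real \<rho>) ^ k \<cdot>\<^sub>m G' ^\<^sub>m k"
      by (rule pow_smult_mat[OF G'])
    finally have eq: "map_mat complex_of_real (F ^\<^sub>m k) = (complex_of_real \<rho>) ^ k \<cdot>\<^sub>m G' ^\<^sub>m k" .
    have "complex_of_real ((F ^\<^sub>m k) $$ (i', j)) = map_mat complex_of_real (F ^\<^sub>m k) $$ (i', j)"
      using that F by simp
    also have "\<dots> = (complex_of_real \<rho>) ^ k * (G' ^\<^sub>m k) $$ (i', j)" unfolding eq using that G' by simp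
    finally have "\<bar>(F ^\<^sub>m k) $$ (i', j)\<bar> = \<rho> ^ k * norm ((G' ^\<^sub>m k) $$ (i', j))"
      using rho by (metis norm_mult norm_of_real norm_power abs_of_pos)
    also have "\<dots> \<le> \<rho> ^ k * c" using c[of k] that G' rho unfolding norm_bound_def
      by (intro mult_left_mono) auto
    finally show ?thesis .
  qed
  have lim_entry: "(\<lambda>k. (F ^\<^sub>m k) $$ (i, j)) \<longlonglongrightarrow> 0" if j: "j < d" for j
  proof (rule tendsto_0_le[where K = c])
    show "(\<lambda>k. \<rho> ^ k) \<longlonglongrightarrow> 0" using rho by (intro LIMSEQ_power_zero) auto
    show "\<forall>\<^sub>F k in sequentially. norm ((F ^\<^sub>m k) $$ (i, j)) \<le> norm (\<rho> ^ k) * c"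
      using bnd[OF i j] rho by (intro always_eventually allI) auto
  qed
  have eq: "(F ^\<^sub>m k *\<^sub>v x) $ i = (\<Sum>j\<in>{0..<d}. (F ^\<^sub>m k) $$ (i,j) * x $ j)" for k
    using F x i by (auto simp: scalar_prod_def)
  show ?thesis unfolding eq
    by (rule tendsto_null_sum) (auto intro!: tendsto_mult_left_zero lim_entry)
qed


lemma conv_schur:
  fixes F :: "real mat"
  assumes F: "F \<in> carrier_mat d d"
    and conv: "\<And>x i. x \<in> carrier_vec d \<Longrightarrow> i < d \<Longrightarrow> (\<lambda>k. (F ^\<^sub>m k *\<^sub>v x) $ i) \<longlonglongrightarrow> 0"
  shows "schur F"
  unfolding schur_def
proof (intro allI impI, rule ccontr)
  fix z assume ev: "eigenvalue (map_mat complex_of_real F) z" and nz: "\<not> cmod z < 1"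
  define G where "G = map_mat complex_of_real F"
  have G: "G \<in> carrier_mat d d" using F unfolding G_def by auto
  obtain w where w: "eigenvector G w z" using ev unfolding G_def eigenvalue_def by auto
  have wc: "w \<in> carrier_vec d" and wnz: "w \<noteq> 0\<^sub>v d" using w G unfolding eigenvector_def by auto
  obtain i where i: "i < d" "w $ i \<noteq> 0"
    using wnz wc by (metis eq_vecI carrier_vecD index_zero_vec(1) index_zero_vec(2))
  define a where "a = vec d (\<lambda>j. Re (w $ j))"
  define b where "b = vec d (\<lambda>j. Im (w $ j))"
  have a: "a \<in> carrier_vec d" and b: "b \<in> carrier_vec d" unfolding a_def b_def by auto
  have pw: "G ^\<^sub>m k *\<^sub>v w = z ^ k \<cdot>\<^sub>v w" for k by (rule eigenvector_pow[OF G w])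
  have eq: "(G ^\<^sub>m k *\<^sub>v w) $ i = complex_of_real ((F ^\<^sub>m k *\<^sub>v a) $ i) + \<i> * complex_of_real ((F ^\<^sub>m k *\<^sub>v b) $ i)" for k
  proof -
    have GF: "G ^\<^sub>m k = map_mat complex_of_real (F ^\<^sub>m k)" unfolding G_def using F
      by (rule of_real_hom.mat_hom_pow[symmetric])
    have "(G ^\<^sub>m k *\<^sub>v w) $ i = (\<Sum>j\<in>{0..<d}. complex_of_real ((F ^\<^sub>m k) $$ (i,j)) * w $ j)"
      unfolding GF using F wc i by (auto simp: scalar_prod_def)
    also have "\<dots> = (\<Sum>j\<in>{0..<d}. complex_of_real ((F ^\<^sub>m k) $$ (i,j) * a $ j) + \<i> * complex_of_real ((F ^\<^sub>m k) $$ (i,j) * b $ j))"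
    proof (rule sum.cong[OF refl])
      fix j assume "j \<in> {0..<d}"
      hence j: "j < d" by auto
      have "w $ j = complex_of_real (a $ j) + \<i> * complex_of_real (b $ j)"
        unfolding a_def b_def using j by (simp add: complex_eq)
      thus "complex_of_real ((F ^\<^sub>m k) $$ (i,j)) * w $ j = complex_of_real ((F ^\<^sub>m k) $$ (i,j) * a $ j) + \<i> * complex_of_real ((F ^\<^sub>m k) $$ (i,j) * b $ j)"
        by (simp add: algebra_simps)
    qed
    also have "\<dots> = complex_of_real (\<Sum>j\<in>{0..<d}. (F ^\<^sub>m k) $$ (i,j) * a $ j) + \<i> * complex_of_real (\<Sum>j\<in>{0..<d}. (F ^\<^sub>m k) $$ (i,j) * b $ j)"
      by (simp add: sum.distrib sum_distrib_left)
    also have "\<dots> = complex_of_real ((F ^\<^sub>m k *\<^sub>v a) $ i) + \<i> * complex_of_real ((F ^\<^sub>m k *\<^sub>v b) $ i)"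
      using F a b i by (auto simp: scalar_prod_def)
    finally show ?thesis .
  qed
  have "(\<lambda>k. (G ^\<^sub>m k *\<^sub>v w) $ i) \<longlonglongrightarrow> 0"
    unfolding eq using tendsto_of_real[OF conv[OF a i(1)], where 'a=complex] tendsto_of_real[OF conv[OF b i(1)], where 'a=complex]
    by (auto intro!: tendsto_add_zero tendsto_mult_right_zero)
  hence lim: "(\<lambda>k. norm ((G ^\<^sub>m k *\<^sub>v w) $ i)) \<longlonglongrightarrow> 0" by (rule tendsto_norm_zero)
  have ge: "norm (w $ i) \<le> norm ((G ^\<^sub>m k *\<^sub>v w) $ i)" for k
  proof -
    have "(G ^\<^sub>m k *\<^sub>v w) $ i = z ^ k * w $ i" unfolding pw using i wc by simp
    hence "norm ((G ^\<^sub>m k *\<^sub>v w) $ i) = norm z ^ k * norm (w $ i)" by (simp add: norm_mult norm_power)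
    moreover have "1 \<le> norm z ^ k" using nz by (simp add: one_le_power)
    ultimately show ?thesis by (simp add: mult_le_cancel_right1)
  qed
  have "norm (w $ i) \<le> 0" by (rule LIMSEQ_le_const[OF lim]) (use ge in auto)
  with i show False by simp
qed



theorem lemma4:
  fixes n m r L :: nat and A B C K P Phi :: "real mat"
  assumes "A \<in> carrier_mat n n" and "B \<in> carrier_mat n m" and "C \<in> carrier_mat r n"
    and "minimal A B C" and "schur A"
    and "mrank (obs_mat L A C) = n"
    and "K \<in> carrier_mat m (L * (m + r))"
    and "P \<in> carrier_mat (L * (m + r)) (L * m + n)"
    and "colspace P = Pspace L A B C" and "P\<^sup>T * P = 1\<^sub>m (L * m + n)"
    and "Phi \<in> carrier_mat (L * (m + r)) (L * (m + r))" and "psd Phi"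
    and "colspace Phi = Pspace L A B C"
  shows "(\<forall>v :: nat \<Rightarrow> real vec.
            v L \<in> gaussian_realizations Phi
            \<and> (\<forall>t \<ge> L. v (Suc t) = (Theta_mat L A B C + Pi_mat L m r * K) *\<^sub>v v t)
            \<longrightarrow> (\<forall>i < L * (m + r). (\<lambda>t. v t $ i) \<longlonglongrightarrow> 0))
         \<longleftrightarrow> schur (P\<^sup>T * (Theta_mat L A B C + Pi_mat L m r * K) * P)"
  proof -
  let ?N = "L * (m + r)"
  let ?d = "L * m + n"
  define Th where "Th = Theta_mat L A B C"
  define Pm where "Pm = Pi_mat L m r"
  define M where "M = Th + Pm * K"
  have Ob: "obs_mat L A C \<in> carrier_mat (L * r) n" using assms(1,3) unfolding obs_mat_def by auto
  have rk: "vec_space.rank (L * r) (obs_mat L A C) = n" using assms(6) Ob unfolding mrank_def by auto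
  have pv: "pinv (obs_mat L A C) \<in> carrier_mat n (L * r)"
    by (rule pinv_carrier[OF Ob]) (rule rank_inj[OF Ob rk])
  have Thc: "Th \<in> carrier_mat ?N ?N" unfolding Th_def by (rule Theta_carrier[OF assms(1-3) pv])
  have Pmc: "Pm \<in> carrier_mat ?N m" unfolding Pm_def Pi_mat_def by auto
  have K: "K \<in> carrier_mat m ?N" by (rule assms(7))
  have Mc: "M \<in> carrier_mat ?N ?N" using Thc Pmc K unfolding M_def by auto
  have P: "P \<in> carrier_mat ?N ?d" by (rule assms(8))
  have PP: "P\<^sup>T * P = 1\<^sub>m ?d" by (rule assms(10))
  have PS0: "Pspace L A B C = colspace (gen Th Pm ?N)"
    unfolding Pspace_def ctrb_gen Th_def[symmetric]
    using assms(2,3) Thc Pm_def by auto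
  have PS: "Pspace L A B C = W Th Pm ?N"
    unfolding PS0 using W_eq[OF Thc Pmc] by simp
  have colP: "colspace P = W Th Pm ?N" using assms(9) PS by simp
  have inv: "M *\<^sub>v w \<in> colspace P" if "w \<in> colspace P" for w
    using W_closed_loop[OF Thc Pmc K] that unfolding colP M_def by blast
  have Fc: "F M P \<in> carrier_mat ?d ?d" by (rule F_carrier[OF Mc P PP inv])
  have real: "gaussian_realizations Phi = colspace P"
    unfolding gaussian_realizations_def using assms(9,13) by simp
  have Meq: "Theta_mat L A B C + Pi_mat L m r * K = M" unfolding M_def Th_def Pm_def ..
  have Feq: "P\<^sup>T * M * P = F M P" using F_eq[OF Mc P PP inv] by simp
  have powv: "M ^\<^sub>m k *\<^sub>v (P *\<^sub>v x) = P *\<^sub>v (F M P ^\<^sub>m k *\<^sub>v x)" if "x \<in> carrier_vec ?d" for k x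
    by (rule MP_pow_vec[OF Mc P PP inv that])
  have Fk: "F M P ^\<^sub>m k *\<^sub>v x \<in> carrier_vec ?d" for k x
    using Fc by (intro carrier_vecI) simp
  show ?thesis unfolding Meq Feq
  proof
    assume H: "\<forall>v :: nat \<Rightarrow> real vec. v L \<in> gaussian_realizations Phi
            \<and> (\<forall>t \<ge> L. v (Suc t) = M *\<^sub>v v t)
            \<longrightarrow> (\<forall>i < ?N. (\<lambda>t. v t $ i) \<longlonglongrightarrow> 0)"
    have conv: "(\<lambda>k. (F M P ^\<^sub>m k *\<^sub>v x) $ i) \<longlonglongrightarrow> 0" if x: "x \<in> carrier_vec ?d" and i: "i < ?d" for x i
    proof -
      define v where "v t = M ^\<^sub>m (t - L) *\<^sub>v (P *\<^sub>v x)" for t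
      have Px: "P *\<^sub>v x \<in> carrier_vec ?N" using P x by auto
      have vL: "v L = P *\<^sub>v x" unfolding v_def using Mc Px by simp
      have "v L \<in> gaussian_realizations Phi" unfolding real vL colspace_def using P x by auto
      moreover have "\<forall>t \<ge> L. v (Suc t) = M *\<^sub>v v t"
      proof (intro allI impI)
        fix t assume "L \<le> t"
        hence "Suc t - L = Suc (t - L)" by auto
        hence "v (Suc t) = (M * M ^\<^sub>m (t - L)) *\<^sub>v (P *\<^sub>v x)"
          unfolding v_def using pow_Suc_left[OF Mc] by simp
        also have "\<dots> = M *\<^sub>v v t" unfolding v_def using assoc_mult_mat_vec[OF Mc pow_carrier_mat[OF Mc] Px] .
        finally show "v (Suc t) = M *\<^sub>v v t" .
      qed
      ultimately have lim: "\<forall>j < ?N. (\<lambda>t. v t $ j) \<longlonglongrightarrow> 0" using H by blast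
      define y where "y k = P *\<^sub>v (F M P ^\<^sub>m k *\<^sub>v x)" for k
      have yv: "y k = v (k + L)" for k unfolding y_def v_def using powv[OF x] by simp
      have yc: "y k \<in> carrier_vec ?N" for k unfolding y_def using P by (intro carrier_vecI) simp
      have ylim: "(\<lambda>k. y k $ j) \<longlonglongrightarrow> 0" if "j < ?N" for j
        unfolding yv using LIMSEQ_ignore_initial_segment[OF lim[rule_format, OF that], of L] by simp
      have "(\<lambda>k. (P\<^sup>T *\<^sub>v y k) $ i) \<longlonglongrightarrow> 0"
        by (rule lim_mat_vec[of _ ?d ?N]) (use P yc ylim i in auto)
      moreover have "P\<^sup>T *\<^sub>v y k = F M P ^\<^sub>m k *\<^sub>v x" for k
      proof -
        have "P\<^sup>T *\<^sub>v y k = (P\<^sup>T * P) *\<^sub>v (F M P ^\<^sub>m k *\<^sub>v x)"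
          unfolding y_def using assoc_mult_mat_vec[of "P\<^sup>T" ?d ?N P ?d "F M P ^\<^sub>m k *\<^sub>v x"] P Fk[of k x] by simp
        thus ?thesis unfolding PP using one_mult_mat_vec[OF Fk[of k x]] by simp
      qed
      ultimately show "(\<lambda>k. (F M P ^\<^sub>m k *\<^sub>v x) $ i) \<longlonglongrightarrow> 0" by simp
    qed
    show "schur (F M P)" by (rule conv_schur[OF Fc conv])
  next
    assume sch: "schur (F M P)"
    show "\<forall>v :: nat \<Rightarrow> real vec. v L \<in> gaussian_realizations Phi
            \<and> (\<forall>t \<ge> L. v (Suc t) = M *\<^sub>v v t)
            \<longrightarrow> (\<forall>i < ?N. (\<lambda>t. v t $ i) \<longlonglongrightarrow> 0)"
    proof (intro allI impI)
      fix v :: "nat \<Rightarrow> real vec" and i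
      assume hv: "v L \<in> gaussian_realizations Phi \<and> (\<forall>t \<ge> L. v (Suc t) = M *\<^sub>v v t)"
        and i: "i < ?N"
      obtain x where x: "x \<in> carrier_vec ?d" and vL: "v L = P *\<^sub>v x"
        using hv P unfolding real colspace_def by auto
      have Px: "P *\<^sub>v x \<in> carrier_vec ?N" using P x by auto
      have vk: "v (k + L) = M ^\<^sub>m k *\<^sub>v v L" for k
      proof (induct k)
        case 0 then show ?case using Mc Px vL by simp
      next
        case (Suc k)
        have "v (Suc k + L) = M *\<^sub>v v (k + L)" using hv by simp
        also have "\<dots> = (M * M ^\<^sub>m k) *\<^sub>v v L" unfolding Suc vL using assoc_mult_mat_vec[OF Mc pow_carrier_mat[OF Mc] Px] by simp
        also have "M * M ^\<^sub>m k = M ^\<^sub>m Suc k" using pow_Suc_left[OF Mc] by simp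
        finally show ?case .
      qed
      have "(\<lambda>k. (P *\<^sub>v (F M P ^\<^sub>m k *\<^sub>v x)) $ i) \<longlonglongrightarrow> 0"
        by (rule lim_mat_vec[of _ ?N ?d]) (use P Fk x i schur_conv[OF Fc sch x] in auto)
      hence "(\<lambda>k. v (k + L) $ i) \<longlonglongrightarrow> 0" unfolding vk vL powv[OF x] .
      thus "(\<lambda>t. v t $ i) \<longlonglongrightarrow> 0" by (rule LIMSEQ_offset)
    qed
  qed
qed

end
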